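(* Let $T>0$. If $\int_{\mathbb{Q}_p^N}\|\xi\|_p^{d\beta}d\mu(\xi)<+\infty$, then \[ \lim_{h\to0^+}\int_0^T\int_{\mathbb{Q}_p^N}\sup_{|r-t|<h}\left|\mathcal{F}\Gamma(r)(\xi)-\mathcal{F}\Gamma(t)(\xi)\right|^2d\mu(\xi)\,dt=0 . \] Furthermore, the same condition implies $\int_0^Tdt\int_{\mathbb{Q}_p^N}|\mathcal{F}\Gamma(t)(\xi)|^2d\mu(\xi)<+\infty$.
   Context: $p$ prime; $\mathbb{Q}_p^N$ with $\|x\|_p=\max_i|x_i|_p$, normalized Haar measure, Fourier transform $(\mathcal{F}\varphi)(\xi)=\int\chi_p(-\xi\cdot x)\varphi(x)d^Nx$, $\chi_p(y)=\exp(2\pi i\{y\}_p)$. $a(\xi)$ is an elliptic polynomial of degree $d$ (homogeneous of degree $d$, $a(\xi)=0\iff\xi=0$), $\beta>0$, and $\Gamma(t,x)=\mathcal{F}^{-1}_{\xi\to x}(e^{-t|a(\xi)|_p^\beta})$ for $t>0$, $\Gamma(0)=\delta$, so $\mathcal{F}\Gamma(t)(\xi)=e^{-t|a(\xi)|_p^\beta}$. $\mu$ is a regular Borel measure on $\mathbb{Q}_p^N$ (the spectral measure of the noise: $\mathcal{F}\mu=f$ with $f$ nonnegative continuous on $\mathbb{Q}_p^N\setminus\{0\}$ defining a positive-definite distribution). *)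

theory Defs
  imports "HOL-Analysis.Analysis" "HOL-Computational_Algebra.Computational_Algebra"
begin

definition padic_abs :: "nat \<Rightarrow> rat \<Rightarrow> real" where
  "padic_abs p q = (if q = 0 then 0 else
     real p powr (- (real_of_int (int (multiplicity (int p) (fst (quotient_of q)))
                                 - int (multiplicity (int p) (snd (quotient_of q)))))))"

definition qp_cauchy :: "nat \<Rightarrow> (nat \<Rightarrow> rat) \<Rightarrow> bool" where
  "qp_cauchy p X = (\<forall>e>0. \<exists>M. \<forall>m\<ge>M. \<forall>n\<ge>M. padic_abs p (X m - X n) < e)"

definition qp_equiv :: "nat \<Rightarrow> (nat \<Rightarrow> rat) \<Rightarrow> (nat \<Rightarrow> rat) \<Rightarrow> bool" where
  "qp_equiv p X Y = ((\<lambda>n. padic_abs p (X n - Y n)) \<longlonglongrightarrow> 0)"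

definition qp_class :: "nat \<Rightarrow> (nat \<Rightarrow> rat) \<Rightarrow> (nat \<Rightarrow> rat) set" where
  "qp_class p X = {Y. qp_cauchy p Y \<and> qp_equiv p X Y}"

definition Qp :: "nat \<Rightarrow> (nat \<Rightarrow> rat) set set" where
  "Qp p = {qp_class p X | X. qp_cauchy p X}"

definition qp_rep :: "(nat \<Rightarrow> rat) set \<Rightarrow> (nat \<Rightarrow> rat)" where
  "qp_rep x = (SOME X. X \<in> x)"

definition qp_zero :: "nat \<Rightarrow> (nat \<Rightarrow> rat) set" where
  "qp_zero p = qp_class p (\<lambda>_. 0)"

definition qp_abs :: "nat \<Rightarrow> (nat \<Rightarrow> rat) set \<Rightarrow> real" where
  "qp_abs p x = lim (\<lambda>n. padic_abs p (qp_rep x n))"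

definition qp_dist :: "nat \<Rightarrow> (nat \<Rightarrow> rat) set \<Rightarrow> (nat \<Rightarrow> rat) set \<Rightarrow> real" where
  "qp_dist p x y = lim (\<lambda>n. padic_abs p (qp_rep x n - qp_rep y n))"

section \<open>Q_p^N with the max norm; N is the cardinality of the finite index type 'n\<close>

definition qp_space :: "nat \<Rightarrow> ('n::finite \<Rightarrow> (nat \<Rightarrow> rat) set) set" where
  "qp_space p = {\<xi>. \<forall>i. \<xi> i \<in> Qp p}"

definition qp_zero_vec :: "nat \<Rightarrow> ('n::finite \<Rightarrow> (nat \<Rightarrow> rat) set)" where
  "qp_zero_vec p = (\<lambda>i. qp_zero p)"

definition qp_norm :: "nat \<Rightarrow> ('n::finite \<Rightarrow> (nat \<Rightarrow> rat) set) \<Rightarrow> real" where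
  "qp_norm p \<xi> = Max (range (\<lambda>i. qp_abs p (\<xi> i)))"

definition qp_vdist :: "nat \<Rightarrow> ('n::finite \<Rightarrow> (nat \<Rightarrow> rat) set) \<Rightarrow> ('n \<Rightarrow> (nat \<Rightarrow> rat) set) \<Rightarrow> real" where
  "qp_vdist p \<xi> \<eta> = Max (range (\<lambda>i. qp_dist p (\<xi> i) (\<eta> i)))"

definition qp_open :: "nat \<Rightarrow> ('n::finite \<Rightarrow> (nat \<Rightarrow> rat) set) set \<Rightarrow> bool" where
  "qp_open p U = (U \<subseteq> qp_space p \<and>
     (\<forall>\<xi>\<in>U. \<exists>e>0. {\<eta> \<in> qp_space p. qp_vdist p \<xi> \<eta> < e} \<subseteq> U))"

definition qp_compact :: "nat \<Rightarrow> ('n::finite \<Rightarrow> (nat \<Rightarrow> rat) set) set \<Rightarrow> bool" where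
  "qp_compact p K = (K \<subseteq> qp_space p \<and>
     (\<forall>C. (\<forall>U\<in>C. qp_open p U) \<and> K \<subseteq> \<Union>C \<longrightarrow> (\<exists>F\<subseteq>C. finite F \<and> K \<subseteq> \<Union>F)))"

definition qp_borel :: "nat \<Rightarrow> ('n::finite \<Rightarrow> (nat \<Rightarrow> rat) set) measure" where
  "qp_borel p = sigma (qp_space p) {U. qp_open p U}"

definition qp_regular_borel :: "nat \<Rightarrow> ('n::finite \<Rightarrow> (nat \<Rightarrow> rat) set) measure \<Rightarrow> bool" where
  "qp_regular_borel p \<mu> =
    (sets \<mu> = sets (qp_borel p) \<and>
     (\<forall>K. qp_compact p K \<longrightarrow> emeasure \<mu> K < \<infinity>) \<and>
     (\<forall>A\<in>sets \<mu>. emeasure \<mu> A = (INF U\<in>{U. qp_open p U \<and> A \<subseteq> U}. emeasure \<mu> U)) \<and>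
     (\<forall>U. qp_open p U \<longrightarrow> emeasure \<mu> U = (SUP K\<in>{K. qp_compact p K \<and> K \<subseteq> U}. emeasure \<mu> K)))"

text \<open>A homogeneous polynomial of degree d is given by its coefficients c alpha (alpha a
  multi-index with |alpha| = d). |a(xi)|_p is computed on Cauchy representatives.\<close>
definition qp_poly_abs :: "nat \<Rightarrow> nat \<Rightarrow> (('n::finite \<Rightarrow> nat) \<Rightarrow> (nat \<Rightarrow> rat) set)
     \<Rightarrow> ('n \<Rightarrow> (nat \<Rightarrow> rat) set) \<Rightarrow> real" where
  "qp_poly_abs p d c \<xi> = lim (\<lambda>n. padic_abs p
      (\<Sum>\<alpha>\<in>{\<alpha>::'n \<Rightarrow> nat. sum \<alpha> UNIV = d}.
          qp_rep (c \<alpha>) n * (\<Prod>i\<in>UNIV. qp_rep (\<xi> i) n ^ \<alpha> i)))"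

definition elliptic_poly :: "nat \<Rightarrow> nat \<Rightarrow> (('n::finite \<Rightarrow> nat) \<Rightarrow> (nat \<Rightarrow> rat) set) \<Rightarrow> bool" where
  "elliptic_poly p d c = ((\<forall>\<alpha>. c \<alpha> \<in> Qp p) \<and>
     (\<forall>\<xi>\<in>qp_space p. qp_poly_abs p d c \<xi> = 0 \<longleftrightarrow> \<xi> = qp_zero_vec p))"

text \<open>Fourier transform of the heat kernel: F Gamma(t)(xi) = exp(-t |a(xi)|_p^beta).\<close>
definition FGamma :: "nat \<Rightarrow> nat \<Rightarrow> (('n::finite \<Rightarrow> nat) \<Rightarrow> (nat \<Rightarrow> rat) set) \<Rightarrow> real
     \<Rightarrow> real \<Rightarrow> ('n \<Rightarrow> (nat \<Rightarrow> rat) set) \<Rightarrow> real" where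
  "FGamma p d c \<beta> t \<xi> = exp (- t * (qp_poly_abs p d c \<xi>) powr \<beta>)"

end

theory Submission imports Defs begin

lemma padic_abs_frac:
  assumes p: "prime p" and a: "a \<noteq> 0" and b: "b \<noteq> 0"
  shows "padic_abs p (of_int a / of_int b) =
     real p powr (-(real (multiplicity (int p) a) - real (multiplicity (int p) b)))"
proof -
  define q where "q = (of_int a / of_int b :: rat)"
  have q0: "q \<noteq> 0" using a b by (simp add: q_def)
  obtain a' b' where qo: "quotient_of q = (a', b')" by (cases "quotient_of q") auto
  have qd: "q = of_int a' / of_int b'" using quotient_of_div[OF qo] .
  have bpos: "b' > 0" using quotient_of_denom_pos'[of q] qo by simp
  have a'0: "a' \<noteq> 0" using q0 qd by auto
  have "(of_int a / of_int b :: rat) = of_int a' / of_int b'" using qd q_def by simp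
  hence "(of_int a * of_int b' :: rat) = of_int a' * of_int b" using b bpos
    by (simp add: frac_eq_eq)
  hence eq: "a * b' = a' * b" by (metis of_int_eq_iff of_int_mult)
  have pe: "prime_elem (int p)" using p by (simp add: prime_nat_int_transfer)
  have "multiplicity (int p) (a * b') = multiplicity (int p) (a' * b)" using eq by simp
  hence "multiplicity (int p) a + multiplicity (int p) b' = multiplicity (int p) a' + multiplicity (int p) b"
    using pe a b a'0 bpos by (simp add: prime_elem_multiplicity_mult_distrib)
  hence "real (multiplicity (int p) a) + real (multiplicity (int p) b') = real (multiplicity (int p) a') + real (multiplicity (int p) b)"
    by (metis of_nat_add)
  hence m: "real (multiplicity (int p) a') - real (multiplicity (int p) b') =
            real (multiplicity (int p) a) - real (multiplicity (int p) b)"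
    by linarith
  show ?thesis unfolding q_def[symmetric] padic_abs_def using q0 qo m by simp
qed

lemma padic_abs_nonneg: "padic_abs p q \<ge> 0"
  by (simp add: padic_abs_def)

lemma padic_abs_zero[simp]: "padic_abs p 0 = 0"
  by (simp add: padic_abs_def)

lemma rat_as_frac: fixes q :: rat obtains a b where "q = of_int a / of_int b" "b \<noteq> 0"
  using quotient_of_div[of q] quotient_of_denom_pos'[of q]
  by (metis less_irrefl prod.collapse)

lemma padic_abs_mult:
  assumes p: "prime p"
  shows "padic_abs p (x * y) = padic_abs p x * padic_abs p y"
proof (cases "x = 0 \<or> y = 0")
  case True then show ?thesis by auto
next
  case False
  obtain a b where x: "x = of_int a / of_int b" "b \<noteq> 0" by (rule rat_as_frac)
  obtain c d where y: "y = of_int c / of_int d" "d \<noteq> 0" by (rule rat_as_frac)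
  have a: "a \<noteq> 0" and c: "c \<noteq> 0" using False x y by auto
  have pe: "prime_elem (int p)" using p by (simp add: prime_nat_int_transfer)
  have xy: "x * y = of_int (a*c) / of_int (b*d)" using x y by simp
  let ?m = "\<lambda>z. real (multiplicity (int p) z)"
  have "padic_abs p (x * y) = real p powr (-(?m (a*c) - ?m (b*d)))"
    unfolding xy using padic_abs_frac[of p "a*c" "b*d"] p a c x y by simp
  also have "?m (a*c) - ?m (b*d) = (?m a - ?m b) + (?m c - ?m d)"
    using pe a c x y by (simp add: prime_elem_multiplicity_mult_distrib)
  also have "real p powr (-((?m a - ?m b) + (?m c - ?m d))) =
     real p powr (-(?m a - ?m b)) * real p powr (-(?m c - ?m d))"
    by (simp add: powr_add[symmetric])
  finally show ?thesis
    unfolding x y padic_abs_frac[OF p a x(2)] padic_abs_frac[OF p c y(2)] .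
qed

lemma padic_abs_uminus:
  assumes p: "prime p"
  shows "padic_abs p (- x) = padic_abs p x"
proof (cases "x = 0")
  case True then show ?thesis by auto
next
  case False
  obtain a b where x: "x = of_int a / of_int b" "b \<noteq> 0" by (rule rat_as_frac)
  have a: "a \<noteq> 0" using False x by auto
  have "- x = of_int (-a) / of_int b" using x by simp
  then show ?thesis using padic_abs_frac[OF p a x(2)] padic_abs_frac[of p "-a" b] p a x
    by (simp add: multiplicity_uminus_right)
qed

lemma padic_abs_triangle:
  assumes p: "prime p"
  shows "padic_abs p (x + y) \<le> padic_abs p x + padic_abs p y"
proof (cases "x = 0 \<or> y = 0 \<or> x + y = 0")
  case True then show ?thesis using padic_abs_nonneg[of p] by auto
next
  case False
  obtain a b where x: "x = of_int a / of_int b" "b \<noteq> 0" by (rule rat_as_frac)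
  obtain c d where y: "y = of_int c / of_int d" "d \<noteq> 0" by (rule rat_as_frac)
  define u where "u = a * d" define v where "v = c * b" define D where "D = b * d"
  have D0: "D \<noteq> 0" using x y by (simp add: D_def)
  have xu: "x = of_int u / of_int D" using x y by (simp add: u_def D_def)
  have yv: "y = of_int v / of_int D" using x y by (simp add: v_def D_def)
  have u0: "u \<noteq> 0" using False xu by auto
  have v0: "v \<noteq> 0" using False yv by auto
  have xy: "x + y = of_int (u + v) / of_int D" using xu yv by (simp add: add_divide_distrib)
  have uv0: "u + v \<noteq> 0" using False xy by auto
  let ?m = "multiplicity (int p)"
  have pe: "prime_elem (int p)" using p by (simp add: prime_nat_int_transfer)
  have np: "\<not> is_unit (int p)" using pe unfolding prime_elem_def by blast
  have k: "min (?m u) (?m v) \<le> ?m (u + v)"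
  proof (rule multiplicity_geI[OF uv0 np])
    have "int p ^ min (?m u) (?m v) dvd u"
      by (meson dvd_trans le_imp_power_dvd min.cobounded1 multiplicity_dvd)
    moreover have "int p ^ min (?m u) (?m v) dvd v"
      by (meson dvd_trans le_imp_power_dvd min.cobounded2 multiplicity_dvd)
    ultimately show "int p ^ min (?m u) (?m v) dvd u + v" by simp
  qed
  have p1: "real p > 1" using p prime_gt_1_nat by auto
  have "padic_abs p (x + y) = real p powr (-(real (?m (u+v)) - real (?m D)))"
    using xy padic_abs_frac[OF p uv0 D0] by simp
  also have "\<dots> \<le> real p powr (-(real (min (?m u) (?m v)) - real (?m D)))"
    using k p1 by (intro powr_mono) auto
  also have "\<dots> \<le> padic_abs p x + padic_abs p y"
    using padic_abs_frac[OF p u0 D0] padic_abs_frac[OF p v0 D0] xu yv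
      padic_abs_nonneg[of p x] padic_abs_nonneg[of p y]
  proof (cases "?m u \<le> ?m v")
    case True
    then have "min (?m u) (?m v) = ?m u" by simp
    then show ?thesis using padic_abs_frac[OF p u0 D0] xu padic_abs_nonneg[of p y] by simp
  next
    case False
    then have "min (?m u) (?m v) = ?m v" by simp
    then show ?thesis using padic_abs_frac[OF p v0 D0] yv padic_abs_nonneg[of p x] by simp
  qed
  finally show ?thesis .
qed

lemma padic_abs_diff_tri:
  assumes p: "prime p"
  shows "padic_abs p (x - z) \<le> padic_abs p (x - y) + padic_abs p (y - z)"
  using padic_abs_triangle[OF p, of "x - y" "y - z"] by simp

lemma padic_abs_rev:
  assumes p: "prime p"
  shows "\<bar>padic_abs p x - padic_abs p y\<bar> \<le> padic_abs p (x - y)"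
proof -
  have 1: "padic_abs p x \<le> padic_abs p (x - y) + padic_abs p y"
    using padic_abs_triangle[OF p, of "x - y" y] by simp
  have 2: "padic_abs p y \<le> padic_abs p (y - x) + padic_abs p x"
    using padic_abs_triangle[OF p, of "y - x" x] by simp
  have "padic_abs p (y - x) = padic_abs p (x - y)"
    using padic_abs_uminus[OF p, of "x - y"] by simp
  then show ?thesis using 1 2 by linarith
qed

lemma cauchy_conv:
  assumes p: "prime p" and X: "qp_cauchy p X"
  shows "convergent (\<lambda>n. padic_abs p (X n))"
proof -
  have "Cauchy (\<lambda>n. padic_abs p (X n))"
  proof (rule metric_CauchyI)
    fix e :: real assume "e > 0"
    then obtain M where M: "\<forall>m\<ge>M. \<forall>n\<ge>M. padic_abs p (X m - X n) < e"
      using X unfolding qp_cauchy_def by blast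
    show "\<exists>M. \<forall>m\<ge>M. \<forall>n\<ge>M. dist (padic_abs p (X m)) (padic_abs p (X n)) < e"
    proof (intro exI allI impI)
      fix m n assume "m \<ge> M" "n \<ge> M"
      then show "dist (padic_abs p (X m)) (padic_abs p (X n)) < e"
        using M padic_abs_rev[OF p, of "X m" "X n"] unfolding dist_real_def by force
    qed
  qed
  then show ?thesis by (simp add: Cauchy_convergent)
qed

lemma cauchy_bounded:
  assumes p: "prime p" and X: "qp_cauchy p X"
  obtains B where "B > 0" "\<And>n. padic_abs p (X n) \<le> B"
proof -
  have "Bseq (\<lambda>n. padic_abs p (X n))" using cauchy_conv[OF p X] convergent_imp_Bseq by blast
  then obtain K where "K > 0" "\<And>n. norm (padic_abs p (X n)) \<le> K" by (auto simp: Bseq_def)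
  then show ?thesis using that[of K] by (metis abs_le_D1 real_norm_def)
qed

lemma cauchy_const: "qp_cauchy p (\<lambda>n. a)"
  unfolding qp_cauchy_def by simp

lemma cauchy_add:
  assumes p: "prime p" and X: "qp_cauchy p X" and Y: "qp_cauchy p Y"
  shows "qp_cauchy p (\<lambda>n. X n + Y n)"
  unfolding qp_cauchy_def
proof (intro allI impI)
  fix e :: real assume e: "e > 0"
  obtain M1 where M1: "\<forall>m\<ge>M1. \<forall>n\<ge>M1. padic_abs p (X m - X n) < e/2"
    using X e unfolding qp_cauchy_def by (meson half_gt_zero)
  obtain M2 where M2: "\<forall>m\<ge>M2. \<forall>n\<ge>M2. padic_abs p (Y m - Y n) < e/2"
    using Y e unfolding qp_cauchy_def by (meson half_gt_zero)
  show "\<exists>M. \<forall>m\<ge>M. \<forall>n\<ge>M. padic_abs p (X m + Y m - (X n + Y n)) < e"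
  proof (intro exI allI impI)
    fix m n assume "m \<ge> max M1 M2" "n \<ge> max M1 M2"
    then have "padic_abs p (X m - X n) < e/2" "padic_abs p (Y m - Y n) < e/2" using M1 M2 by auto
    moreover have "padic_abs p (X m + Y m - (X n + Y n)) = padic_abs p ((X m - X n) + (Y m - Y n))"
      by (rule arg_cong[of _ _ "padic_abs p"]) simp
    ultimately show "padic_abs p (X m + Y m - (X n + Y n)) < e"
      using padic_abs_triangle[OF p, of "X m - X n" "Y m - Y n"] by linarith
  qed
qed

lemma cauchy_mult:
  assumes p: "prime p" and X: "qp_cauchy p X" and Y: "qp_cauchy p Y"
  shows "qp_cauchy p (\<lambda>n. X n * Y n)"
  unfolding qp_cauchy_def
proof (intro allI impI)
  fix e :: real assume e: "e > 0"
  obtain B1 where B1: "B1 > 0" "\<And>n. padic_abs p (X n) \<le> B1" using cauchy_bounded[OF p X] by blast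
  obtain B2 where B2: "B2 > 0" "\<And>n. padic_abs p (Y n) \<le> B2" using cauchy_bounded[OF p Y] by blast
  define e' where "e' = e / (B1 + B2 + 1)"
  have e': "e' > 0" using e B1 B2 by (simp add: e'_def)
  obtain M1 where M1: "\<forall>m\<ge>M1. \<forall>n\<ge>M1. padic_abs p (X m - X n) < e'"
    using X e' unfolding qp_cauchy_def by blast
  obtain M2 where M2: "\<forall>m\<ge>M2. \<forall>n\<ge>M2. padic_abs p (Y m - Y n) < e'"
    using Y e' unfolding qp_cauchy_def by blast
  have key: "(B1 + B2) * e' < e" using e B1 B2 unfolding e'_def by (simp add: field_simps)
  show "\<exists>M. \<forall>m\<ge>M. \<forall>n\<ge>M. padic_abs p (X m * Y m - X n * Y n) < e"
  proof (intro exI allI impI)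
    fix m n assume "m \<ge> max M1 M2" "n \<ge> max M1 M2"
    then have a: "padic_abs p (X m - X n) < e'" "padic_abs p (Y m - Y n) < e'" using M1 M2 by auto
    have eq: "X m * Y m - X n * Y n = X m * (Y m - Y n) + (X m - X n) * Y n" by (simp add: algebra_simps)
    have "padic_abs p (X m * Y m - X n * Y n) \<le> padic_abs p (X m) * padic_abs p (Y m - Y n) + padic_abs p (X m - X n) * padic_abs p (Y n)"
      unfolding eq using padic_abs_triangle[OF p] padic_abs_mult[OF p] by metis
    also have "\<dots> \<le> B1 * e' + e' * B2"
      using a B1 B2 padic_abs_nonneg[of p] e'
      by (intro add_mono mult_mono) (auto intro: less_imp_le)
    also have "\<dots> < e" using key by (simp add: algebra_simps)
    finally show "padic_abs p (X m * Y m - X n * Y n) < e" .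
  qed
qed

lemma cauchy_sum:
  assumes p: "prime p" and X: "\<And>a. a \<in> S \<Longrightarrow> qp_cauchy p (X a)"
  shows "qp_cauchy p (\<lambda>n. \<Sum>a\<in>S. X a n)"
proof (cases "finite S")
  case True
  then show ?thesis using X
  proof (induction S rule: finite_induct)
    case empty then show ?case by (simp add: cauchy_const)
  next
    case (insert x F) then show ?case by (simp add: cauchy_add[OF p])
  qed
next
  case False then show ?thesis by (simp add: cauchy_const)
qed

lemma cauchy_prod:
  assumes p: "prime p" and X: "\<And>a. a \<in> S \<Longrightarrow> qp_cauchy p (X a)"
  shows "qp_cauchy p (\<lambda>n. \<Prod>a\<in>S. X a n)"
proof (cases "finite S")
  case True
  then show ?thesis using X
  proof (induction S rule: finite_induct)
    case empty then show ?case by (simp add: cauchy_const)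
  next
    case (insert x F) then show ?case by (simp add: cauchy_mult[OF p])
  qed
next
  case False then show ?thesis by (simp add: cauchy_const)
qed

lemma cauchy_power:
  assumes p: "prime p" and X: "qp_cauchy p X"
  shows "qp_cauchy p (\<lambda>n. X n ^ k)"
proof (induction k)
  case 0 then show ?case by (simp add: cauchy_const)
next
  case (Suc k) then show ?case using cauchy_mult[OF p X Suc] by simp
qed

lemma equiv_refl: "qp_equiv p X X"
  unfolding qp_equiv_def by simp

lemma equiv_sym:
  assumes p: "prime p" and "qp_equiv p X Y" shows "qp_equiv p Y X"
proof -
  have "\<And>n. padic_abs p (Y n - X n) = padic_abs p (X n - Y n)"
    using padic_abs_uminus[OF p] by (metis minus_diff_eq)
  then show ?thesis using assms(2) unfolding qp_equiv_def by simp
qed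

lemma equiv_trans:
  assumes p: "prime p" and XY: "qp_equiv p X Y" and YZ: "qp_equiv p Y Z" shows "qp_equiv p X Z"
proof -
  have "(\<lambda>n. padic_abs p (X n - Y n) + padic_abs p (Y n - Z n)) \<longlonglongrightarrow> 0"
    using tendsto_add[OF XY[unfolded qp_equiv_def] YZ[unfolded qp_equiv_def]] by simp
  then show ?thesis unfolding qp_equiv_def
    by (rule Lim_null_comparison[rotated])
       (use padic_abs_diff_tri[OF p] padic_abs_nonneg in \<open>auto intro!: always_eventually\<close>)
qed

lemma Qp_rep:
  assumes "x \<in> Qp p"
  shows "qp_rep x \<in> x" "qp_cauchy p (qp_rep x)"
proof -
  obtain X where x: "x = qp_class p X" "qp_cauchy p X" using assms unfolding Qp_def by blast
  have "X \<in> x" using x equiv_refl unfolding qp_class_def by blast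
  then show 1: "qp_rep x \<in> x" unfolding qp_rep_def by (metis someI)
  then show "qp_cauchy p (qp_rep x)" using x unfolding qp_class_def by blast
qed

lemma qp_abs_lim:
  assumes p: "prime p" and "x \<in> Qp p"
  shows "(\<lambda>n. padic_abs p (qp_rep x n)) \<longlonglongrightarrow> qp_abs p x"
  unfolding qp_abs_def using cauchy_conv[OF p Qp_rep(2)[OF assms(2)]]
  by (simp add: convergent_LIMSEQ_iff)

lemma qp_abs_nonneg:
  assumes p: "prime p" and "x \<in> Qp p"
  shows "qp_abs p x \<ge> 0"
  apply (rule LIMSEQ_le_const[OF qp_abs_lim[OF assms]])
  using padic_abs_nonneg by auto

lemma qp_zero_in: "qp_zero p \<in> Qp p"
  unfolding Qp_def qp_zero_def using cauchy_const by blast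

lemma qp_zero_rep:
  assumes p: "prime p"
  shows "(\<lambda>n. padic_abs p (qp_rep (qp_zero p) n)) \<longlonglongrightarrow> 0"
proof -
  have "qp_rep (qp_zero p) \<in> qp_zero p" using Qp_rep(1)[OF qp_zero_in] .
  then have "qp_equiv p (\<lambda>_. 0) (qp_rep (qp_zero p))" unfolding qp_zero_def qp_class_def by blast
  then show ?thesis unfolding qp_equiv_def using padic_abs_uminus[OF p] by simp
qed

lemma qp_abs_zero_imp:
  assumes p: "prime p" and x: "x \<in> Qp p" and a: "qp_abs p x = 0"
  shows "x = qp_zero p"
proof -
  obtain X where xX: "x = qp_class p X" "qp_cauchy p X" using x unfolding Qp_def by blast
  have "qp_rep x \<in> x" by (rule Qp_rep(1)[OF x])
  then have Xy: "qp_equiv p X (qp_rep x)" using xX unfolding qp_class_def by blast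
  have "qp_equiv p (qp_rep x) (\<lambda>_. 0)" using qp_abs_lim[OF p x] a unfolding qp_equiv_def by simp
  then have X0: "qp_equiv p X (\<lambda>_. 0)" using equiv_trans[OF p Xy] by blast
  have "qp_class p X = qp_class p (\<lambda>_. 0)"
    unfolding qp_class_def using X0 equiv_trans[OF p] equiv_sym[OF p] by blast
  then show ?thesis using xX unfolding qp_zero_def by simp
qed

lemma qp_dist_zero:
  assumes p: "prime p" and x: "x \<in> Qp p"
  shows "qp_dist p (qp_zero p) x = qp_abs p x" "qp_dist p x (qp_zero p) = qp_abs p x"
proof -
  let ?y = "qp_rep x" and ?z = "qp_rep (qp_zero p)"
  have z: "(\<lambda>n. padic_abs p (?z n)) \<longlonglongrightarrow> 0" by (rule qp_zero_rep[OF p])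
  have y: "(\<lambda>n. padic_abs p (?y n)) \<longlonglongrightarrow> qp_abs p x" by (rule qp_abs_lim[OF p x])
  have d: "(\<lambda>n. padic_abs p (?y n - ?z n) - padic_abs p (?y n)) \<longlonglongrightarrow> 0"
  proof (rule Lim_null_comparison[OF _ z], intro always_eventually allI)
    fix n
    have "\<bar>padic_abs p (?y n - ?z n) - padic_abs p (?y n)\<bar> \<le> padic_abs p ((?y n - ?z n) - ?y n)"
      by (rule padic_abs_rev[OF p])
    also have "\<dots> = padic_abs p (?z n)" using padic_abs_uminus[OF p, of "?z n"] by simp
    finally show "norm (padic_abs p (?y n - ?z n) - padic_abs p (?y n)) \<le> padic_abs p (?z n)" by simp
  qed
  have 1: "(\<lambda>n. padic_abs p (?y n - ?z n)) \<longlonglongrightarrow> qp_abs p x"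
    using tendsto_add[OF d y] by simp
  have "\<And>n. padic_abs p (?z n - ?y n) = padic_abs p (?y n - ?z n)"
    using padic_abs_uminus[OF p] by (metis minus_diff_eq)
  then have 2: "(\<lambda>n. padic_abs p (?z n - ?y n)) \<longlonglongrightarrow> qp_abs p x" using 1 by simp
  show "qp_dist p (qp_zero p) x = qp_abs p x" unfolding qp_dist_def using 2 by (rule limI)
  show "qp_dist p x (qp_zero p) = qp_abs p x" unfolding qp_dist_def using 1 by (rule limI)
qed

lemma padic_abs_sum_le:
  assumes p: "prime p"
  shows "padic_abs p (\<Sum>a\<in>S. f a) \<le> (\<Sum>a\<in>S. padic_abs p (f a))"
proof (cases "finite S")
  case True then show ?thesis
  proof (induction S rule: finite_induct)
    case empty then show ?case by simp
  next
    case (insert x F)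
    then show ?case using padic_abs_triangle[OF p, of "f x" "sum f F"] by simp
  qed
next
  case False then show ?thesis by simp
qed

lemma padic_abs_one: assumes p: "prime p" shows "padic_abs p 1 = 1"
  using padic_abs_frac[OF p, of 1 1] p prime_gt_0_nat by simp

lemma padic_abs_prod:
  assumes p: "prime p"
  shows "padic_abs p (\<Prod>a\<in>S. f a) = (\<Prod>a\<in>S. padic_abs p (f a))"
proof (cases "finite S")
  case True then show ?thesis
  proof (induction S rule: finite_induct)
    case empty then show ?case by (simp add: padic_abs_one[OF p])
  next
    case (insert x F)
    then show ?case using padic_abs_mult[OF p] by simp
  qed
next
  case False then show ?thesis by (simp add: padic_abs_one[OF p])
qed

lemma padic_abs_power:
  assumes p: "prime p"
  shows "padic_abs p (x ^ k) = padic_abs p x ^ k"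
  by (induction k) (simp_all add: padic_abs_one[OF p] padic_abs_mult[OF p])

lemma qp_norm_ge:
  "qp_abs p (\<xi> i) \<le> qp_norm p (\<xi> :: 'n::finite \<Rightarrow> _)"
  unfolding qp_norm_def by (rule Max_ge) auto

lemma qp_norm_nonneg:
  assumes p: "prime p" and x: "\<xi> \<in> qp_space p"
  shows "qp_norm p (\<xi> :: 'n::finite \<Rightarrow> _) \<ge> 0"
proof -
  obtain i :: 'n where True by simp
  have "\<xi> i \<in> Qp p" using x unfolding qp_space_def by blast
  then show ?thesis using qp_abs_nonneg[OF p] qp_norm_ge[of p \<xi> i] by force
qed

lemma qp_norm_zero_imp:
  assumes p: "prime p" and x: "\<xi> \<in> qp_space p" and n: "qp_norm p (\<xi> :: 'n::finite \<Rightarrow> _) = 0"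
  shows "\<xi> = qp_zero_vec p"
proof
  fix i
  have xi: "\<xi> i \<in> Qp p" using x unfolding qp_space_def by blast
  have "qp_abs p (\<xi> i) = 0" using qp_abs_nonneg[OF p xi] qp_norm_ge[of p \<xi> i] n by linarith
  then show "\<xi> i = qp_zero_vec p i" using qp_abs_zero_imp[OF p xi] by (simp add: qp_zero_vec_def)
qed

lemma poly_bound:
  assumes p: "prime p" and c: "\<And>\<alpha>. c \<alpha> \<in> Qp p" and x: "\<xi> \<in> qp_space p"
  shows "qp_poly_abs p d c (\<xi> :: 'n::finite \<Rightarrow> _) \<le>
           (\<Sum>\<alpha>\<in>{\<alpha>::'n \<Rightarrow> nat. sum \<alpha> UNIV = d}. qp_abs p (c \<alpha>)) * qp_norm p \<xi> ^ d"
    and "qp_poly_abs p d c \<xi> \<ge> 0"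
proof -
  define S where "S = {\<alpha>::'n \<Rightarrow> nat. sum \<alpha> UNIV = d}"
  have xi: "\<And>i. \<xi> i \<in> Qp p" using x unfolding qp_space_def by blast
  define P where "P = (\<lambda>n. \<Sum>\<alpha>\<in>S. qp_rep (c \<alpha>) n * (\<Prod>i\<in>UNIV. qp_rep (\<xi> i) n ^ \<alpha> i))"
  have cP: "qp_cauchy p P" unfolding P_def
    by (intro cauchy_sum[OF p] cauchy_mult[OF p] cauchy_prod[OF p] cauchy_power[OF p] Qp_rep(2) c xi)
  have lim1: "(\<lambda>n. padic_abs p (P n)) \<longlonglongrightarrow> qp_poly_abs p d c \<xi>"
    using cauchy_conv[OF p cP] unfolding qp_poly_abs_def P_def S_def
    by (simp add: convergent_LIMSEQ_iff)
  show "qp_poly_abs p d c \<xi> \<ge> 0"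
    apply (rule LIMSEQ_le_const[OF lim1]) using padic_abs_nonneg by auto
  define L where "L = (\<Sum>\<alpha>\<in>S. qp_abs p (c \<alpha>) * (\<Prod>i\<in>UNIV. qp_abs p (\<xi> i) ^ \<alpha> i))"
  have lim2: "(\<lambda>n. \<Sum>\<alpha>\<in>S. padic_abs p (qp_rep (c \<alpha>) n) * (\<Prod>i\<in>UNIV. padic_abs p (qp_rep (\<xi> i) n) ^ \<alpha> i)) \<longlonglongrightarrow> L"
    unfolding L_def
    by (intro tendsto_sum tendsto_mult tendsto_prod tendsto_power qp_abs_lim[OF p] c xi)
  have le: "padic_abs p (P n) \<le> (\<Sum>\<alpha>\<in>S. padic_abs p (qp_rep (c \<alpha>) n) * (\<Prod>i\<in>UNIV. padic_abs p (qp_rep (\<xi> i) n) ^ \<alpha> i))" for n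
    unfolding P_def using padic_abs_sum_le[OF p, of "\<lambda>\<alpha>. qp_rep (c \<alpha>) n * (\<Prod>i\<in>UNIV. qp_rep (\<xi> i) n ^ \<alpha> i)" S]
    by (simp add: padic_abs_mult[OF p] padic_abs_prod[OF p] padic_abs_power[OF p])
  have QL: "qp_poly_abs p d c \<xi> \<le> L"
    by (rule LIMSEQ_le[OF lim1 lim2]) (use le in auto)
  have "L \<le> (\<Sum>\<alpha>\<in>S. qp_abs p (c \<alpha>) * qp_norm p \<xi> ^ d)"
    unfolding L_def
  proof (rule sum_mono)
    fix \<alpha> assume a: "\<alpha> \<in> S"
    have "(\<Prod>i\<in>UNIV. qp_abs p (\<xi> i) ^ \<alpha> i) \<le> (\<Prod>i\<in>UNIV. qp_norm p \<xi> ^ \<alpha> i)"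
      by (rule prod_mono) (use qp_abs_nonneg[OF p xi] qp_norm_ge[of p \<xi>] in \<open>auto intro: power_mono\<close>)
    also have "\<dots> = qp_norm p \<xi> ^ d" using a unfolding S_def by (simp add: power_sum[symmetric])
    finally show "qp_abs p (c \<alpha>) * (\<Prod>i\<in>UNIV. qp_abs p (\<xi> i) ^ \<alpha> i) \<le> qp_abs p (c \<alpha>) * qp_norm p \<xi> ^ d"
      using qp_abs_nonneg[OF p c, of \<alpha>] by (simp add: mult_left_mono)
  qed
  then show "qp_poly_abs p d c \<xi> \<le> (\<Sum>\<alpha>\<in>{\<alpha>::'n \<Rightarrow> nat. sum \<alpha> UNIV = d}. qp_abs p (c \<alpha>)) * qp_norm p \<xi> ^ d"
    using QL unfolding S_def by (simp add: sum_distrib_right)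
qed

lemma A_bound:
  assumes p: "prime p" and ell: "elliptic_poly p d c" and b: "\<beta> > 0" and x: "\<xi> \<in> qp_space p"
  shows "qp_poly_abs p d c (\<xi> :: 'n::finite \<Rightarrow> _) powr \<beta> \<le>
     (\<Sum>\<alpha>\<in>{\<alpha>::'n \<Rightarrow> nat. sum \<alpha> UNIV = d}. qp_abs p (c \<alpha>)) powr \<beta> * qp_norm p \<xi> powr (real d * \<beta>)"
proof -
  have c: "\<And>\<alpha>. c \<alpha> \<in> Qp p" using ell unfolding elliptic_poly_def by blast
  define C where "C = (\<Sum>\<alpha>\<in>{\<alpha>::'n \<Rightarrow> nat. sum \<alpha> UNIV = d}. qp_abs p (c \<alpha>))"
  have C0: "C \<ge> 0" unfolding C_def using qp_abs_nonneg[OF p c] by (simp add: sum_nonneg)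
  have n0: "qp_norm p \<xi> \<ge> 0" by (rule qp_norm_nonneg[OF p x])
  show ?thesis
  proof (cases "qp_norm p \<xi> = 0")
    case True
    then have "\<xi> = qp_zero_vec p" using qp_norm_zero_imp[OF p x] by blast
    then have "qp_poly_abs p d c \<xi> = 0" using ell x unfolding elliptic_poly_def by blast
    then show ?thesis by simp
  next
    case False
    then have npos: "qp_norm p \<xi> > 0" using n0 by simp
    have Q0: "qp_poly_abs p d c \<xi> \<ge> 0" by (rule poly_bound(2)[OF p c x])
    have "qp_poly_abs p d c \<xi> powr \<beta> \<le> (C * qp_norm p \<xi> ^ d) powr \<beta>"
      using poly_bound(1)[OF p c x] Q0 b unfolding C_def by (intro powr_mono2) auto
    also have "\<dots> = C powr \<beta> * (qp_norm p \<xi> ^ d) powr \<beta>"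
      using C0 n0 by (simp add: powr_mult)
    also have "(qp_norm p \<xi> ^ d) powr \<beta> = qp_norm p \<xi> powr (real d * \<beta>)"
      using npos by (simp add: powr_realpow[symmetric] powr_powr)
    finally show ?thesis unfolding C_def .
  qed
qed

lemma nn_integral_cmult_le:
  fixes r :: real assumes r: "r \<ge> 0"
  shows "(\<integral>\<^sup>+x. ennreal r * f x \<partial>M) \<le> ennreal r * (\<integral>\<^sup>+x. f x \<partial>M)"
proof (cases "r = 0")
  case True then show ?thesis by simp
next
  case False
  then have rpos: "r > 0" using r by simp
  have inv: "ennreal (1/r) * ennreal r = 1" using rpos by (simp add: ennreal_mult[symmetric])
  show ?thesis
    unfolding nn_integral_def
  proof (rule SUP_least)
    fix g assume g: "g \<in> {g. simple_function M g \<and> g \<le> (\<lambda>x. ennreal r * f x)}"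
    define g' where "g' = (\<lambda>x. ennreal (1/r) * g x)"
    have sg: "simple_function M g'" unfolding g'_def using g by (auto intro: simple_function_compose1)
    have "g' \<le> f"
    proof (rule le_funI)
      fix x
      have "g' x \<le> ennreal (1/r) * (ennreal r * f x)" unfolding g'_def using g
        by (auto intro: mult_left_mono le_funD)
      also have "\<dots> = f x" using inv by (simp add: mult.assoc[symmetric])
      finally show "g' x \<le> f x" .
    qed
    have gg: "g = (\<lambda>x. ennreal r * g' x)" unfolding g'_def
      using inv by (simp add: mult.assoc[symmetric] mult.commute)
    have "integral\<^sup>S M g = ennreal r * integral\<^sup>S M g'"
      by (subst gg) (simp add: sg)
    also have "\<dots> \<le> ennreal r * (SUP g\<in>{g. simple_function M g \<and> g \<le> f}. integral\<^sup>S M g)"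
      using sg \<open>g' \<le> f\<close> by (intro mult_left_mono SUP_upper) auto
    finally show "integral\<^sup>S M g \<le> ennreal r * (SUP g\<in>{g. simple_function M g \<and> g \<le> f}. integral\<^sup>S M g)" .
  qed
qed

lemma zero_vec_in: "qp_zero_vec p \<in> qp_space p"
  unfolding qp_space_def qp_zero_vec_def using qp_zero_in by blast

lemma vdist_zero:
  assumes p: "prime p" and x: "\<xi> \<in> qp_space p"
  shows "qp_vdist p (qp_zero_vec p) (\<xi> :: 'n::finite \<Rightarrow> _) = qp_norm p \<xi>"
    "qp_vdist p \<xi> (qp_zero_vec p) = qp_norm p \<xi>"
proof -
  have xi: "\<And>i. \<xi> i \<in> Qp p" using x unfolding qp_space_def by blast
  show "qp_vdist p (qp_zero_vec p) \<xi> = qp_norm p \<xi>"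
    unfolding qp_vdist_def qp_norm_def qp_zero_vec_def using qp_dist_zero(1)[OF p xi] by simp
  show "qp_vdist p \<xi> (qp_zero_vec p) = qp_norm p \<xi>"
    unfolding qp_vdist_def qp_norm_def qp_zero_vec_def using qp_dist_zero(2)[OF p xi] by simp
qed

lemma open_compl_zero:
  assumes p: "prime p"
  shows "qp_open p (qp_space p - {qp_zero_vec p :: 'n::finite \<Rightarrow> _})"
  unfolding qp_open_def
proof (intro conjI ballI)
  show "qp_space p - {qp_zero_vec p} \<subseteq> qp_space p" by blast
  fix \<eta> :: "'n \<Rightarrow> _" assume e: "\<eta> \<in> qp_space p - {qp_zero_vec p}"
  then have es: "\<eta> \<in> qp_space p" and ne: "\<eta> \<noteq> qp_zero_vec p" by auto
  have "qp_norm p \<eta> \<noteq> 0" using qp_norm_zero_imp[OF p es] ne by blast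
  then have pos: "qp_norm p \<eta> > 0" using qp_norm_nonneg[OF p es] by simp
  show "\<exists>e>0. {\<zeta> \<in> qp_space p. qp_vdist p \<eta> \<zeta> < e} \<subseteq> qp_space p - {qp_zero_vec p}"
    using pos vdist_zero(2)[OF p es] by (intro exI[of _ "qp_norm p \<eta>"]) auto
qed

lemma finite_mu:
  fixes \<mu> :: "('n::finite \<Rightarrow> (nat \<Rightarrow> rat) set) measure"
  assumes p: "prime p" and reg: "qp_regular_borel p \<mu>" and a: "a \<ge> 0"
    and I: "(\<integral>\<^sup>+\<xi>. ennreal (qp_norm p \<xi> powr a) \<partial>\<mu>) < \<infinity>"
  shows "emeasure \<mu> (space \<mu>) < \<infinity>"
proof -
  have sets: "sets \<mu> = sets (qp_borel p)" using reg unfolding qp_regular_borel_def by blast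
  have sub: "{U. qp_open p U} \<subseteq> Pow (qp_space p :: ('n \<Rightarrow> _) set)" unfolding qp_open_def by blast
  have sets2: "sets \<mu> = sigma_sets (qp_space p) {U. qp_open p U}"
    using sets sets_measure_of[OF sub] unfolding qp_borel_def by simp
  have sp: "space \<mu> = qp_space p"
    using sets_eq_imp_space_eq[OF sets] unfolding qp_borel_def by (simp add: space_measure_of_conv)
  have opn: "U \<in> sets \<mu>" if "qp_open p U" for U
    unfolding sets2 using that by (auto intro: sigma_sets.Basic)
  let ?z = "qp_zero_vec p :: 'n \<Rightarrow> _"
  have zs: "{?z} \<in> sets \<mu>"
  proof -
    have "qp_space p - (qp_space p - {?z}) \<in> sigma_sets (qp_space p) {U. qp_open p U}"
      using open_compl_zero[OF p] by (intro sigma_sets.Compl sigma_sets.Basic) auto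
    moreover have "qp_space p - (qp_space p - {?z}) = {?z}" using zero_vec_in by blast
    ultimately show ?thesis unfolding sets2 by simp
  qed
  have cpt: "qp_compact p {?z}"
    unfolding qp_compact_def
  proof (intro conjI allI impI)
    show "{?z} \<subseteq> qp_space p" using zero_vec_in by blast
    fix C assume "(\<forall>U\<in>C. qp_open p U) \<and> {?z} \<subseteq> \<Union> C"
    then obtain U where "U \<in> C" "?z \<in> U" by blast
    then show "\<exists>F\<subseteq>C. finite F \<and> {?z} \<subseteq> \<Union> F" by (intro exI[of _ "{U}"]) auto
  qed
  have fin0: "emeasure \<mu> {?z} < \<infinity>" using reg cpt unfolding qp_regular_borel_def by blast
  have "emeasure \<mu> {?z} = (INF U\<in>{U. qp_open p U \<and> {?z} \<subseteq> U}. emeasure \<mu> U)"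
    using reg zs unfolding qp_regular_borel_def by blast
  then obtain U where U: "qp_open p U" "?z \<in> U" "emeasure \<mu> U < \<infinity>"
    using fin0 by (auto simp: INF_less_iff)
  obtain e where e: "e > 0" "{\<eta> \<in> qp_space p. qp_vdist p ?z \<eta> < e} \<subseteq> U"
    using U(1,2) unfolding qp_open_def by blast
  have far: "qp_norm p \<eta> \<ge> e" if "\<eta> \<in> qp_space p - U" for \<eta>
  proof (rule ccontr)
    assume "\<not> qp_norm p \<eta> \<ge> e"
    then have "qp_vdist p ?z \<eta> < e" using vdist_zero(1)[OF p, of \<eta>] that by simp
    then show False using e(2) that by blast
  qed
  have cU: "qp_space p - U \<in> sets \<mu>" using opn[OF U(1)] sp by (metis sets.compl_sets)
  have "ennreal (e powr a) * emeasure \<mu> (qp_space p - U) =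
        (\<integral>\<^sup>+\<xi>. ennreal (e powr a) * indicator (qp_space p - U) \<xi> \<partial>\<mu>)"
    using cU by (simp add: nn_integral_cmult_indicator)
  also have "\<dots> \<le> (\<integral>\<^sup>+\<xi>. ennreal (qp_norm p \<xi> powr a) \<partial>\<mu>)"
  proof (rule nn_integral_mono)
    fix \<xi> assume "\<xi> \<in> space \<mu>"
    show "ennreal (e powr a) * indicator (qp_space p - U) \<xi> \<le> ennreal (qp_norm p \<xi> powr a)"
    proof (cases "\<xi> \<in> qp_space p - U")
      case True
      then have "e powr a \<le> qp_norm p \<xi> powr a" using far[OF True] e a by (intro powr_mono2) auto
      then show ?thesis using True by (simp add: ennreal_leI)
    next
      case False then show ?thesis by simp
    qed
  qed
  finally have "ennreal (e powr a) * emeasure \<mu> (qp_space p - U) < \<infinity>" using I by simp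
  moreover have "ennreal (e powr a) \<noteq> 0" using e by simp
  ultimately have fin1: "emeasure \<mu> (qp_space p - U) < \<infinity>"
    by (auto simp: ennreal_mult_less_top)
  have "U \<subseteq> qp_space p" using U(1) unfolding qp_open_def by blast
  then have "space \<mu> = U \<union> (qp_space p - U)" using sp by blast
  then have "emeasure \<mu> (space \<mu>) \<le> emeasure \<mu> U + emeasure \<mu> (qp_space p - U)"
    using emeasure_subadditive[OF opn[OF U(1)] cU] by simp
  also have "\<dots> < \<infinity>" using U(3) fin1 by (simp add: ennreal_add_less_top)
  finally show ?thesis .
qed

lemma exp_lip_aux:
  fixes x y :: real assumes "x \<le> y" "y \<le> 0"
  shows "exp y - exp x \<le> y - x"
proof -
  have e: "exp x = exp y * exp (x - y)" by (simp add: mult_exp_exp)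
  have "exp (x - y) \<ge> 1 + (x - y)" by (rule exp_ge_add_one_self)
  moreover have "exp (x - y) \<le> 1" using assms by simp
  moreover have "exp y \<le> 1" using assms by simp
  moreover have "exp y > 0" by simp
  ultimately have m1: "exp y * (1 - exp (x - y)) \<le> 1 - exp (x - y)"
    using mult_right_mono[of "exp y" 1 "1 - exp (x - y)"] by simp
  moreover have "1 - exp (x - y) \<le> y - x" using \<open>exp (x - y) \<ge> 1 + (x - y)\<close> by linarith
  ultimately have "exp y * (1 - exp (x - y)) \<le> y - x" by (rule order_trans)
  then show ?thesis using e by (simp add: algebra_simps)
qed

lemma exp_lip:
  fixes x y :: real assumes "x \<le> 0" "y \<le> 0"
  shows "\<bar>exp x - exp y\<bar> \<le> \<bar>x - y\<bar>"
  using exp_lip_aux[of x y] exp_lip_aux[of y x] assms exp_le_cancel_iff[of x y] exp_le_cancel_iff[of y x]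
  by (cases "x \<le> y") (auto simp: abs_if)

lemma exp_sq_bound:
  fixes A r t :: real assumes A: "A \<ge> 0" and r: "r \<ge> 0" and t: "t \<ge> 0"
  shows "(exp (- r * A) - exp (- t * A))\<^sup>2 \<le> A * \<bar>r - t\<bar>"
proof -
  define D where "D = \<bar>exp (- r * A) - exp (- t * A)\<bar>"
  have x: "- r * A \<le> 0" and y: "- t * A \<le> 0" using A r t by (auto simp: mult_nonneg_nonneg)
  have "exp (- r * A) \<le> 1" "exp (- t * A) \<le> 1" using x y by auto
  moreover have "exp (- r * A) > 0" "exp (- t * A) > 0" by auto
  moreover have "\<And>u v::real. 0 < u \<Longrightarrow> u \<le> 1 \<Longrightarrow> 0 < v \<Longrightarrow> v \<le> 1 \<Longrightarrow> \<bar>u - v\<bar> \<le> 1" by auto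
  ultimately have D1: "D \<le> 1" unfolding D_def by blast
  have D0: "D \<ge> 0" unfolding D_def by simp
  have "- r * A - - t * A = A * (t - r)" by (simp add: algebra_simps)
  then have "\<bar>- r * A - - t * A\<bar> = A * \<bar>r - t\<bar>" using A by (simp add: abs_mult abs_minus_commute)
  then have DL: "D \<le> A * \<bar>r - t\<bar>" unfolding D_def using exp_lip[OF x y] by simp
  have "(exp (- r * A) - exp (- t * A))\<^sup>2 = D * D" unfolding D_def by (simp add: power2_eq_square)
  also have "\<dots> \<le> 1 * D" using D0 D1 by (intro mult_right_mono) auto
  finally show ?thesis using DL by simp
qed

theorem lemma6:
  fixes p d :: nat and \<beta> T :: real
    and c :: "('n::finite \<Rightarrow> nat) \<Rightarrow> (nat \<Rightarrow> rat) set"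
    and \<mu> :: "('n \<Rightarrow> (nat \<Rightarrow> rat) set) measure"
  assumes "prime p"
    and "elliptic_poly p d c"
    and "\<beta> > 0"
    and "T > 0"
    and "qp_regular_borel p \<mu>"
    and "(\<integral>\<^sup>+\<xi>. ennreal (qp_norm p \<xi> powr (real d * \<beta>)) \<partial>\<mu>) < \<infinity>"
  shows "((\<lambda>h. \<integral>\<^sup>+t\<in>{0..T}. (\<integral>\<^sup>+\<xi>.
             (SUP r\<in>{r. 0 \<le> r \<and> \<bar>r - t\<bar> < h}.
                ennreal ((FGamma p d c \<beta> r \<xi> - FGamma p d c \<beta> t \<xi>)\<^sup>2)) \<partial>\<mu>) \<partial>lborel)
           \<longlongrightarrow> 0) (at_right 0) \<and>
         (\<integral>\<^sup>+t\<in>{0..T}. (\<integral>\<^sup>+\<xi>. ennreal ((FGamma p d c \<beta> t \<xi>)\<^sup>2) \<partial>\<mu>) \<partial>lborel) < \<infinity>"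
proof -
  note p = assms(1) and ell = assms(2) and b = assms(3) and T = assms(4) and reg = assms(5)
    and I = assms(6)
  have sets: "sets \<mu> = sets (qp_borel p)" using reg unfolding qp_regular_borel_def by blast
  have sp: "space \<mu> = qp_space p"
    using sets_eq_imp_space_eq[OF sets] unfolding qp_borel_def by (simp add: space_measure_of_conv)
  define A where "A = (\<lambda>\<xi>. qp_poly_abs p d c \<xi> powr \<beta>)"
  have A0: "\<And>\<xi>. A \<xi> \<ge> 0" unfolding A_def by simp
  have FG: "\<And>t \<xi>. FGamma p d c \<beta> t \<xi> = exp (- t * A \<xi>)" unfolding FGamma_def A_def by simp
  define K where "K = (\<Sum>\<alpha>\<in>{\<alpha>::'n \<Rightarrow> nat. sum \<alpha> UNIV = d}. qp_abs p (c \<alpha>)) powr \<beta>"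
  have K0: "K \<ge> 0" unfolding K_def by simp
  have AK: "\<And>\<xi>. \<xi> \<in> space \<mu> \<Longrightarrow> A \<xi> \<le> K * qp_norm p \<xi> powr (real d * \<beta>)"
    unfolding A_def K_def sp using A_bound[OF p ell b] by blast
  obtain I' where I': "I' \<ge> 0" "(\<integral>\<^sup>+\<xi>. ennreal (qp_norm p \<xi> powr (real d * \<beta>)) \<partial>\<mu>) = ennreal I'"
    using I by (auto simp: less_top_ennreal)
  have bound: "(\<integral>\<^sup>+t\<in>{0..T}. (\<integral>\<^sup>+\<xi>.
             (SUP r\<in>{r. 0 \<le> r \<and> \<bar>r - t\<bar> < h}.
                ennreal ((FGamma p d c \<beta> r \<xi> - FGamma p d c \<beta> t \<xi>)\<^sup>2)) \<partial>\<mu>) \<partial>lborel)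
          \<le> ennreal (h * (K * I') * T)" if h: "h > 0" for h
  proof -
    have inner: "(\<integral>\<^sup>+\<xi>. (SUP r\<in>{r. 0 \<le> r \<and> \<bar>r - t\<bar> < h}.
                ennreal ((FGamma p d c \<beta> r \<xi> - FGamma p d c \<beta> t \<xi>)\<^sup>2)) \<partial>\<mu>) \<le> ennreal (h * (K * I'))"
      if t: "t \<ge> 0" for t
    proof -
      have "(\<integral>\<^sup>+\<xi>. (SUP r\<in>{r. 0 \<le> r \<and> \<bar>r - t\<bar> < h}.
                ennreal ((FGamma p d c \<beta> r \<xi> - FGamma p d c \<beta> t \<xi>)\<^sup>2)) \<partial>\<mu>)
            \<le> (\<integral>\<^sup>+\<xi>. ennreal h * (ennreal K * ennreal (qp_norm p \<xi> powr (real d * \<beta>))) \<partial>\<mu>)"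
      proof (rule nn_integral_mono)
        fix \<xi> assume xs: "\<xi> \<in> space \<mu>"
        show "(SUP r\<in>{r. 0 \<le> r \<and> \<bar>r - t\<bar> < h}.
                ennreal ((FGamma p d c \<beta> r \<xi> - FGamma p d c \<beta> t \<xi>)\<^sup>2))
              \<le> ennreal h * (ennreal K * ennreal (qp_norm p \<xi> powr (real d * \<beta>)))"
        proof (rule SUP_least)
          fix r assume "r \<in> {r. 0 \<le> r \<and> \<bar>r - t\<bar> < h}"
          then have r: "r \<ge> 0" "\<bar>r - t\<bar> < h" by auto
          have "(FGamma p d c \<beta> r \<xi> - FGamma p d c \<beta> t \<xi>)\<^sup>2 \<le> A \<xi> * \<bar>r - t\<bar>"
            unfolding FG by (rule exp_sq_bound[OF A0 r(1) t])
          also have "\<dots> \<le> A \<xi> * h" using r(2) A0[of \<xi>] by (intro mult_left_mono) auto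
          also have "\<dots> \<le> (K * qp_norm p \<xi> powr (real d * \<beta>)) * h"
            using AK[OF xs] h by (intro mult_right_mono) auto
          finally have "(FGamma p d c \<beta> r \<xi> - FGamma p d c \<beta> t \<xi>)\<^sup>2 \<le> h * (K * qp_norm p \<xi> powr (real d * \<beta>))"
            by (simp add: algebra_simps)
          then show "ennreal ((FGamma p d c \<beta> r \<xi> - FGamma p d c \<beta> t \<xi>)\<^sup>2)
              \<le> ennreal h * (ennreal K * ennreal (qp_norm p \<xi> powr (real d * \<beta>)))"
            using h K0 by (simp add: ennreal_mult[symmetric] ennreal_leI)
        qed
      qed
      also have "\<dots> \<le> ennreal h * (\<integral>\<^sup>+\<xi>. ennreal K * ennreal (qp_norm p \<xi> powr (real d * \<beta>)) \<partial>\<mu>)"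
        using h by (intro nn_integral_cmult_le) simp
      also have "\<dots> \<le> ennreal h * (ennreal K * ennreal I')"
        using nn_integral_cmult_le[OF K0, where f="\<lambda>\<xi>. ennreal (qp_norm p \<xi> powr (real d * \<beta>))" and M=\<mu>] I'(2)
        by (intro mult_left_mono) auto
      also have "\<dots> = ennreal (h * (K * I'))" using h K0 I'(1) by (simp add: ennreal_mult)
      finally show ?thesis .
    qed
    have "(\<integral>\<^sup>+t\<in>{0..T}. (\<integral>\<^sup>+\<xi>.
             (SUP r\<in>{r. 0 \<le> r \<and> \<bar>r - t\<bar> < h}.
                ennreal ((FGamma p d c \<beta> r \<xi> - FGamma p d c \<beta> t \<xi>)\<^sup>2)) \<partial>\<mu>) \<partial>lborel)
          \<le> (\<integral>\<^sup>+t. ennreal (h * (K * I')) * indicator {0..T} t \<partial>lborel)"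
      by (rule nn_integral_mono) (auto simp: indicator_def inner)
    also have "\<dots> = ennreal (h * (K * I')) * ennreal T"
      using T by (simp add: nn_integral_cmult_indicator)
    also have "\<dots> = ennreal (h * (K * I') * T)" using h K0 I'(1) T by (simp add: ennreal_mult)
    finally show ?thesis .
  qed
  have lim0: "((\<lambda>h. ennreal (h * (K * I') * T)) \<longlongrightarrow> 0) (at_right 0)"
  proof -
    have "((\<lambda>h::real. h * (K * I') * T) \<longlongrightarrow> 0 * (K * I') * T) (at_right 0)"
      by (intro tendsto_mult tendsto_const tendsto_ident_at)
    then have "((\<lambda>h. ennreal (h * (K * I') * T)) \<longlongrightarrow> ennreal (0 * (K * I') * T)) (at_right 0)"
      by (rule tendsto_ennrealI)
    then show ?thesis by simp
  qed
  have part1: "((\<lambda>h. \<integral>\<^sup>+t\<in>{0..T}. (\<integral>\<^sup>+\<xi>.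
             (SUP r\<in>{r. 0 \<le> r \<and> \<bar>r - t\<bar> < h}.
                ennreal ((FGamma p d c \<beta> r \<xi> - FGamma p d c \<beta> t \<xi>)\<^sup>2)) \<partial>\<mu>) \<partial>lborel)
           \<longlongrightarrow> 0) (at_right 0)"
    by (rule tendsto_sandwich[OF _ _ tendsto_const lim0])
       (auto intro: eventually_mono[OF eventually_at_right_less] bound)
  have fin: "emeasure \<mu> (space \<mu>) < \<infinity>"
    by (rule finite_mu[OF p reg _ I]) (use b in simp)
  then obtain M where M: "M \<ge> 0" "emeasure \<mu> (space \<mu>) = ennreal M"
    by (auto simp: less_top_ennreal)
  have inner2: "(\<integral>\<^sup>+\<xi>. ennreal ((FGamma p d c \<beta> t \<xi>)\<^sup>2) \<partial>\<mu>) \<le> ennreal M" if t: "t \<ge> 0" for t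
  proof -
    have "(\<integral>\<^sup>+\<xi>. ennreal ((FGamma p d c \<beta> t \<xi>)\<^sup>2) \<partial>\<mu>) \<le> (\<integral>\<^sup>+\<xi>. 1 \<partial>\<mu>)"
    proof (rule nn_integral_mono)
      fix \<xi>
      have "- t * A \<xi> \<le> 0" using t A0[of \<xi>] by (simp add: mult_nonneg_nonneg)
      then have "exp (- t * A \<xi>) \<le> 1" by simp
      then have "(exp (- t * A \<xi>))\<^sup>2 \<le> 1" by (simp add: power_le_one)
      then show "ennreal ((FGamma p d c \<beta> t \<xi>)\<^sup>2) \<le> 1" unfolding FG by (simp add: ennreal_leI)
    qed
    also have "\<dots> = ennreal M" using M by simp
    finally show ?thesis .
  qed
  have "(\<integral>\<^sup>+t\<in>{0..T}. (\<integral>\<^sup>+\<xi>. ennreal ((FGamma p d c \<beta> t \<xi>)\<^sup>2) \<partial>\<mu>) \<partial>lborel)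
        \<le> (\<integral>\<^sup>+t. ennreal M * indicator {0..T} t \<partial>lborel)"
    by (rule nn_integral_mono) (auto simp: indicator_def inner2)
  also have "\<dots> = ennreal M * ennreal T" using T by (simp add: nn_integral_cmult_indicator)
  also have "\<dots> < \<infinity>" by (simp add: ennreal_mult_less_top)
  finally have part2: "(\<integral>\<^sup>+t\<in>{0..T}. (\<integral>\<^sup>+\<xi>. ennreal ((FGamma p d c \<beta> t \<xi>)\<^sup>2) \<partial>\<mu>) \<partial>lborel) < \<infinity>" .
  show ?thesis using part1 part2 by blast
qed

end
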